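(* For every connected graph $G$, $\tau(G)\leq \left\lceil \tfrac{1}{2}(\operatorname{dll}(G)+1)\,\operatorname{p}(G)\right\rceil$.
   Context: For an integer $k\geq 0$, the $k$-daddy-longlegs $W^{(k)}$ is the tree with vertex set $\{r,u_1,\dots,u_k,v_1,\dots,v_k\}$ and edge set $\{ru_i,u_iv_i:i\in\{1,\dots,k\}\}$ (so $W^{(0)}$ is a single vertex). The daddy-longlegs number $\operatorname{dll}(G)$ is the maximum $k\geq 0$ such that $W^{(k)}$ is a minor of $G$. The path number $\operatorname{p}(G)$ is the maximum $n$ such that $G$ contains a path on $n$ vertices. The vertex cover number $\tau(G)$ is the minimum size of a set $A\subseteq V(G)$ such that $V(G)\setminus A$ is an independent set. *)

theory Defs
  imports Complex_Main
begin

definition graph :: "'a set \<Rightarrow> ('a \<Rightarrow> 'a \<Rightarrow> bool) \<Rightarrow> bool" where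
  "graph V E \<longleftrightarrow> finite V \<and> (\<forall>u v. E u v \<longrightarrow> u \<in> V \<and> v \<in> V) \<and>
     (\<forall>u v. E u v \<longrightarrow> E v u) \<and> (\<forall>u. \<not> E u u)"

definition walk_in :: "('a \<Rightarrow> 'a \<Rightarrow> bool) \<Rightarrow> 'a set \<Rightarrow> 'a list \<Rightarrow> bool" where
  "walk_in E S xs \<longleftrightarrow> xs \<noteq> [] \<and> set xs \<subseteq> S \<and>
     (\<forall>i. Suc i < length xs \<longrightarrow> E (xs ! i) (xs ! Suc i))"

definition is_path :: "'a set \<Rightarrow> ('a \<Rightarrow> 'a \<Rightarrow> bool) \<Rightarrow> 'a list \<Rightarrow> bool" where
  "is_path V E xs \<longleftrightarrow> walk_in E V xs \<and> distinct xs"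

definition connected_set :: "('a \<Rightarrow> 'a \<Rightarrow> bool) \<Rightarrow> 'a set \<Rightarrow> bool" where
  "connected_set E S \<longleftrightarrow> S \<noteq> {} \<and>
     (\<forall>u\<in>S. \<forall>v\<in>S. \<exists>xs. walk_in E S xs \<and> hd xs = u \<and> last xs = v)"

definition connected_graph :: "'a set \<Rightarrow> ('a \<Rightarrow> 'a \<Rightarrow> bool) \<Rightarrow> bool" where
  "connected_graph V E \<longleftrightarrow> graph V E \<and> connected_set E V"

definition is_minor :: "'b set \<Rightarrow> ('b \<Rightarrow> 'b \<Rightarrow> bool) \<Rightarrow> 'a set \<Rightarrow> ('a \<Rightarrow> 'a \<Rightarrow> bool) \<Rightarrow> bool" where
  "is_minor VH EH V E \<longleftrightarrow> (\<exists>\<phi> :: 'b \<Rightarrow> 'a set.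
     (\<forall>x\<in>VH. \<phi> x \<subseteq> V \<and> connected_set E (\<phi> x)) \<and>
     (\<forall>x\<in>VH. \<forall>y\<in>VH. x \<noteq> y \<longrightarrow> \<phi> x \<inter> \<phi> y = {}) \<and>
     (\<forall>x\<in>VH. \<forall>y\<in>VH. EH x y \<longrightarrow> (\<exists>a\<in>\<phi> x. \<exists>b\<in>\<phi> y. E a b)))"

datatype dll_vertex = R | U nat | L nat

definition dll_V :: "nat \<Rightarrow> dll_vertex set" where
  "dll_V k = {R} \<union> U ` {1..k} \<union> L ` {1..k}"

definition dll_E :: "nat \<Rightarrow> dll_vertex \<Rightarrow> dll_vertex \<Rightarrow> bool" where
  "dll_E k x y \<longleftrightarrow> (\<exists>i\<in>{1..k}.
     (x = R \<and> y = U i) \<or> (x = U i \<and> y = R) \<or> (x = U i \<and> y = L i) \<or> (x = L i \<and> y = U i))"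

definition dll :: "'a set \<Rightarrow> ('a \<Rightarrow> 'a \<Rightarrow> bool) \<Rightarrow> nat" where
  "dll V E = (GREATEST k. is_minor (dll_V k) (dll_E k) V E)"

definition path_number :: "'a set \<Rightarrow> ('a \<Rightarrow> 'a \<Rightarrow> bool) \<Rightarrow> nat" where
  "path_number V E = Max {length xs | xs. is_path V E xs}"

definition vertex_cover :: "'a set \<Rightarrow> ('a \<Rightarrow> 'a \<Rightarrow> bool) \<Rightarrow> 'a set \<Rightarrow> bool" where
  "vertex_cover V E A \<longleftrightarrow> A \<subseteq> V \<and> (\<forall>u\<in>V - A. \<forall>v\<in>V - A. \<not> E u v)"

definition tau :: "'a set \<Rightarrow> ('a \<Rightarrow> 'a \<Rightarrow> bool) \<Rightarrow> nat" where
  "tau V E = Min {card A | A. vertex_cover V E A}"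

end

theory Submission
  imports Defs
begin


lemma walk_single[simp]: "walk_in E S [x] \<longleftrightarrow> x \<in> S"
  by (auto simp: walk_in_def)

lemma walk_Cons2[simp]: "walk_in E S (x#y#xs) \<longleftrightarrow> x \<in> S \<and> E x y \<and> walk_in E S (y#xs)"
proof
  assume H: "walk_in E S (x#y#xs)"
  then show "x \<in> S \<and> E x y \<and> walk_in E S (y#xs)"
  proof (intro conjI)
    show "x \<in> S" "E x y" using H unfolding walk_in_def by (auto dest: spec[of _ 0])
    show "walk_in E S (y#xs)" unfolding walk_in_def
    proof (intro conjI allI impI)
      fix i assume "Suc i < length (y#xs)"
      then show "E ((y#xs) ! i) ((y#xs) ! Suc i)"
        using H unfolding walk_in_def by (metis Suc_less_eq length_Cons nth_Cons_Suc)
    qed (use H in \<open>auto simp: walk_in_def\<close>)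
  qed
next
  assume H: "x \<in> S \<and> E x y \<and> walk_in E S (y#xs)"
  show "walk_in E S (x#y#xs)"
    unfolding walk_in_def
  proof (intro conjI allI impI)
    fix i assume "Suc i < length (x#y#xs)"
    then show "E ((x#y#xs) ! i) ((x#y#xs) ! Suc i)"
      using H unfolding walk_in_def by (cases i) auto
  qed (use H in \<open>auto simp: walk_in_def\<close>)
qed

lemma walk_nonempty: "walk_in E S xs \<Longrightarrow> xs \<noteq> []"
  by (simp add: walk_in_def)

lemma walk_set: "walk_in E S xs \<Longrightarrow> set xs \<subseteq> S"
  by (simp add: walk_in_def)

lemma walk_append:
  assumes "xs \<noteq> []" "ys \<noteq> []"
  shows "walk_in E S (xs @ ys) \<longleftrightarrow> walk_in E S xs \<and> walk_in E S ys \<and> E (last xs) (hd ys)"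
  using assms
proof (induction xs)
  case Nil then show ?case by simp
next
  case (Cons a xs)
  show ?case
  proof (cases xs)
    case Nil
    then show ?thesis using Cons.prems by (cases ys) auto
  next
    case (Cons b zs)
    then show ?thesis using Cons.IH Cons.prems by auto
  qed
qed

lemma walk_rev:
  assumes sym: "\<And>a b. E a b \<Longrightarrow> E b a"
  shows "walk_in E S xs \<Longrightarrow> walk_in E S (rev xs)"
proof (induction xs)
  case Nil then show ?case by (simp add: walk_in_def)
next
  case (Cons a xs)
  show ?case
  proof (cases xs)
    case Nil then show ?thesis using Cons.prems by simp
  next
    case (Cons b zs)
    then have "walk_in E S (rev xs)" "E b a" "a \<in> S" using Cons.IH Cons.prems sym by auto
    then show ?thesis using Cons walk_append[of "rev xs" "[a]" E S]
      by (simp add: last_rev)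
  qed
qed

lemma walk_mono: "walk_in E S xs \<Longrightarrow> S \<subseteq> T \<Longrightarrow> walk_in E T xs"
  by (auto simp: walk_in_def)

definition Rel :: "('a \<Rightarrow> 'a \<Rightarrow> bool) \<Rightarrow> 'a set \<Rightarrow> 'a \<Rightarrow> 'a \<Rightarrow> bool" where
  "Rel E S a b \<longleftrightarrow> a \<in> S \<and> b \<in> S \<and> E a b"

lemma walk_rtr: "walk_in E S xs \<Longrightarrow> (Rel E S)\<^sup>*\<^sup>* (hd xs) (last xs)"
proof (induction xs)
  case Nil then show ?case by (simp add: walk_in_def)
next
  case (Cons a xs)
  show ?case
  proof (cases xs)
    case Nil then show ?thesis by simp
  next
    case (Cons b zs)
    have w: "walk_in E S (b#zs)" "a \<in> S" "E a b" using Cons Cons.prems by auto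
    then have "(Rel E S)\<^sup>*\<^sup>* b (last xs)" using Cons.IH Cons by simp
    moreover have "Rel E S a b" using w walk_set[OF w(1)] by (simp add: Rel_def)
    ultimately have "Rel E S a b" "(Rel E S)\<^sup>*\<^sup>* b (last xs)" by auto
    then show ?thesis using Cons by (auto intro: converse_rtranclp_into_rtranclp)
  qed
qed

lemma rtr_walk: "(Rel E S)\<^sup>*\<^sup>* u v \<Longrightarrow> u \<in> S \<Longrightarrow> \<exists>xs. walk_in E S xs \<and> hd xs = u \<and> last xs = v"
proof (induction rule: rtranclp_induct)
  case base then show ?case by (intro exI[of _ "[u]"]) simp
next
  case (step y z)
  then obtain xs where xs: "walk_in E S xs" "hd xs = u" "last xs = y" by blast
  have "walk_in E S (xs @ [z])"
    using walk_append[of xs "[z]" E S] xs step.hyps(2) walk_nonempty[OF xs(1)] by (auto simp: Rel_def)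
  then show ?case using xs walk_nonempty[OF xs(1)] by (intro exI[of _ "xs @ [z]"]) auto
qed

lemma rtr_in: "(Rel E S)\<^sup>*\<^sup>* u v \<Longrightarrow> u \<in> S \<Longrightarrow> v \<in> S"
  by (induction rule: rtranclp_induct) (auto simp: Rel_def)

lemma conn_iff: "connected_set E S \<longleftrightarrow> S \<noteq> {} \<and> (\<forall>u\<in>S. \<forall>v\<in>S. (Rel E S)\<^sup>*\<^sup>* u v)"
  unfolding connected_set_def using walk_rtr rtr_walk by metis

lemma rtr_sym:
  assumes sym: "\<And>a b. E a b \<Longrightarrow> E b a"
  shows "(Rel E S)\<^sup>*\<^sup>* a b \<Longrightarrow> (Rel E S)\<^sup>*\<^sup>* b a"
proof (induction rule: rtranclp_induct)
  case base then show ?case by simp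
next
  case (step y z)
  then have "Rel E S z y" using sym by (auto simp: Rel_def)
  then show ?case using step.IH by (rule converse_rtranclp_into_rtranclp)
qed

lemma rtr_mono: "(Rel E S)\<^sup>*\<^sup>* a b \<Longrightarrow> S \<subseteq> T \<Longrightarrow> (Rel E T)\<^sup>*\<^sup>* a b"
proof (induction rule: rtranclp_induct)
  case (step y z)
  then have "Rel E T y z" by (auto simp: Rel_def)
  then show ?case using step by (auto intro: rtranclp.rtrancl_into_rtrancl)
qed simp

lemma rtr_restrict:
  assumes "(Rel E T)\<^sup>*\<^sup>* a b" "a \<in> C" "C \<subseteq> T" "\<And>y z. y \<in> C \<Longrightarrow> Rel E T y z \<Longrightarrow> z \<in> C"
  shows "(Rel E C)\<^sup>*\<^sup>* a b \<and> b \<in> C"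
  using assms(1)
proof (induction rule: rtranclp_induct)
  case base then show ?case using assms by simp
next
  case (step y z)
  then have "z \<in> C" using assms(4) by blast
  then show ?case using step by (auto simp: Rel_def intro: rtranclp.rtrancl_into_rtrancl)
qed

lemma conn_insert:
  assumes "connected_set E B" "b \<in> B" "E x b" "\<And>a b. E a b \<Longrightarrow> E b a"
  shows "connected_set E (insert x B)"
proof -
  have R: "(Rel E (insert x B))\<^sup>*\<^sup>* u v" if "u \<in> B" "v \<in> B" for u v
    using assms(1) that unfolding conn_iff by (auto intro: rtr_mono)
  have xb: "(Rel E (insert x B))\<^sup>*\<^sup>* x b" "(Rel E (insert x B))\<^sup>*\<^sup>* b x"
    using assms by (auto simp: Rel_def)
  show ?thesis unfolding conn_iff
    using R xb assms(2) by (auto intro: rtranclp_trans)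
qed

lemma conn_union:
  assumes "connected_set E X" "connected_set E Y" "r \<in> X" "r \<in> Y"
  shows "connected_set E (X \<union> Y)"
proof -
  have RX: "(Rel E (X \<union> Y))\<^sup>*\<^sup>* u v" if "u \<in> X" "v \<in> X" for u v
    using assms(1) that unfolding conn_iff by (auto intro: rtr_mono)
  have RY: "(Rel E (X \<union> Y))\<^sup>*\<^sup>* u v" if "u \<in> Y" "v \<in> Y" for u v
    using assms(2) that unfolding conn_iff by (auto intro: rtr_mono)
  show ?thesis unfolding conn_iff
    using RX RY assms(3,4) by (auto, meson rtranclp_trans, meson rtranclp_trans)
qed




definition legs :: "('a\<Rightarrow>'a\<Rightarrow>bool) \<Rightarrow> 'a set \<Rightarrow> 'a \<Rightarrow> 'a set \<Rightarrow> 'a list \<Rightarrow> 'a list \<Rightarrow> bool" where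
 "legs E S r B us ws \<longleftrightarrow> r \<in> B \<and> B \<subseteq> S \<and> connected_set E B \<and> length us = length ws \<and>
    distinct (us @ ws) \<and> set us \<union> set ws \<subseteq> S - B \<and>
    (\<forall>i<length us. E (us!i) (ws!i) \<and> (\<exists>b\<in>B. E b (us!i)))"

definition good :: "('a\<Rightarrow>'a\<Rightarrow>bool) \<Rightarrow> nat \<Rightarrow> 'a set \<Rightarrow> 'a \<Rightarrow> 'a set \<Rightarrow> nat \<Rightarrow> nat \<Rightarrow> bool" where
 "good E p S r A h m \<longleftrightarrow> A \<subseteq> S \<and> r \<in> A \<and> (\<forall>u\<in>S. \<forall>v\<in>S. E u v \<longrightarrow> u \<in> A \<or> v \<in> A) \<and>
   (\<exists>xs. walk_in E S xs \<and> distinct xs \<and> hd xs = r \<and> length xs = h+1) \<and> m \<ge> 1 \<and>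
   2*card A + 3*m + p \<le> 2*h + m*p + 3 \<and>
   ((A = {r} \<and> m = 1) \<or> (\<exists>B us ws. legs E S r B us ws \<and> length us = m))"

lemma good_base:
  assumes "E r x" "r \<noteq> x" "\<And>a. \<not> E a a"
  shows "good E p {r,x} r {r} 1 1"
  unfolding good_def
proof (intro conjI)
  show "\<exists>xs. walk_in E {r,x} xs \<and> distinct xs \<and> hd xs = r \<and> length xs = 1+1"
    using assms by (intro exI[of _ "[r,x]"]) auto
qed (use assms in auto)

lemma good_lift:
  assumes g: "good E p C c A h m" and fin: "finite C" and rC: "r \<notin> C" and rc: "E r c"
    and sym: "\<And>a b. E a b \<Longrightarrow> E b a" and irr: "\<And>a. \<not> E a a"
  shows "good E p (insert r C) r (insert r A) (h+1) m"
proof -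
  from g have AC: "A \<subseteq> C" and cA: "c \<in> A" and cov: "\<forall>u\<in>C. \<forall>v\<in>C. E u v \<longrightarrow> u \<in> A \<or> v \<in> A"
    and m1: "m \<ge> 1" and bd: "2*card A + 3*m + p \<le> 2*h + m*p + 3"
    and ty: "(A = {c} \<and> m = 1) \<or> (\<exists>B us ws. legs E C c B us ws \<and> length us = m)"
    unfolding good_def by blast+
  from g obtain xs where xs: "walk_in E C xs" "distinct xs" "hd xs = c" "length xs = h+1"
    unfolding good_def by blast
  have finA: "finite A" using AC fin finite_subset by blast
  have cardA: "card (insert r A) = card A + 1" using finA AC rC by (subst card_insert_disjoint) auto
  have xsne: "xs \<noteq> []" using xs walk_nonempty by blast
  have w2: "walk_in E (insert r C) (r # xs)"
    using xs xsne rc walk_mono[OF xs(1), of "insert r C"] by (cases xs) auto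
  have d2: "distinct (r # xs)" using xs walk_set[OF xs(1)] rC by auto
  have legs2: "\<exists>B us ws. legs E (insert r C) r B us ws \<and> length us = m"
    using ty
  proof
    assume "A = {c} \<and> m = 1"
    then have m: "m = 1" by simp
    have "h \<ge> 1"
    proof (rule ccontr)
      assume "\<not> h \<ge> 1"
      then have "h = 0" by simp
      then have "card A = 1" using \<open>A = {c} \<and> m = 1\<close> by simp
      then show False using bd m \<open>h = 0\<close> by simp
    qed
    then obtain w zs where xw: "xs = c # w # zs" using xs by (cases xs; cases "tl xs") auto
    then have cw: "E c w" "w \<in> C" using xs walk_set[OF xs(1)] by auto
    have cC: "c \<in> C" using cA AC by auto
    have "legs E (insert r C) r {r} [c] [w]"
      unfolding legs_def using cw rC cC rc irr xs(2) xw
      by (auto simp: conn_iff)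
    then show ?thesis using m by (intro exI[of _ "{r}"] exI[of _ "[c]"] exI[of _ "[w]"]) auto
  next
    assume "\<exists>B us ws. legs E C c B us ws \<and> length us = m"
    then obtain B us ws where L: "legs E C c B us ws" "length us = m" by blast
    have cB: "c \<in> B" and BC: "B \<subseteq> C" and cB': "connected_set E B" using L unfolding legs_def by auto
    have "connected_set E (insert r B)" using conn_insert[OF cB' cB rc] sym by blast
    then have "legs E (insert r C) r (insert r B) us ws"
      using L rC BC unfolding legs_def by auto
    then show ?thesis using L by blast
  qed
  show ?thesis unfolding good_def
  proof (intro conjI)
    show "\<exists>xs. walk_in E (insert r C) xs \<and> distinct xs \<and> hd xs = r \<and> length xs = h + 1 + 1"
      using w2 d2 xs by (intro exI[of _ "r#xs"]) auto
    show "2 * card (insert r A) + 3 * m + p \<le> 2 * (h + 1) + m * p + 3" using bd cardA by simp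
    show "(insert r A = {r} \<and> m = 1) \<or> (\<exists>B us ws. legs E (insert r C) r B us ws \<and> length us = m)"
      using legs2 by blast
  qed (use AC cov m1 in auto)
qed




lemma legs_mono: "legs E S1 r B us ws \<Longrightarrow> S1 \<subseteq> S \<Longrightarrow> legs E S r B us ws"
  unfolding legs_def by blast

lemma good_extend:
  assumes g: "good E p S1 r A h m" and sub: "S1 \<subseteq> S" and cov: "\<forall>u\<in>S. \<forall>v\<in>S. E u v \<longrightarrow> u \<in> A \<or> v \<in> A"
  shows "good E p S r A h m"
proof -
  from g have A: "A \<subseteq> S1" "r \<in> A" and m1: "m \<ge> 1" and bd: "2*card A + 3*m + p \<le> 2*h + m*p + 3"
    and ty: "(A = {r} \<and> m = 1) \<or> (\<exists>B us ws. legs E S1 r B us ws \<and> length us = m)"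
    unfolding good_def by blast+
  from g obtain xs where xs: "walk_in E S1 xs" "distinct xs" "hd xs = r" "length xs = h+1"
    unfolding good_def by blast
  have ty2: "(A = {r} \<and> m = 1) \<or> (\<exists>B us ws. legs E S r B us ws \<and> length us = m)"
    using ty legs_mono[OF _ sub] by blast
  have w: "\<exists>xs. walk_in E S xs \<and> distinct xs \<and> hd xs = r \<and> length xs = h+1"
    using xs walk_mono[OF xs(1) sub] by blast
  have "A \<subseteq> S" using A sub by blast
  then show ?thesis unfolding good_def using A(2) cov w m1 bd ty2 by blast
qed

lemma good_merge_le:
  assumes g1: "good E p S1 r A1 h1 m1" and g2: "good E p S2 r A2 h2 m2"
    and fin: "finite S1" "finite S2" and int: "S1 \<inter> S2 = {r}"
    and cross: "\<forall>u\<in>S1\<union>S2. \<forall>v\<in>S1\<union>S2. E u v \<longrightarrow> (u\<in>S1 \<and> v\<in>S1) \<or> (u\<in>S2 \<and> v\<in>S2)"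
    and pb: "\<forall>ys. walk_in E (S1\<union>S2) ys \<and> distinct ys \<longrightarrow> length ys \<le> p"
    and sym: "\<And>a b. E a b \<Longrightarrow> E b a" and hle: "h2 \<le> h1"
  shows "\<exists>A h m. good E p (S1\<union>S2) r A h m"
proof -
  from g1 have A1: "A1 \<subseteq> S1" "r \<in> A1" and cov1: "\<forall>u\<in>S1. \<forall>v\<in>S1. E u v \<longrightarrow> u \<in> A1 \<or> v \<in> A1"
    and m1: "m1 \<ge> 1" and bd1: "2*card A1 + 3*m1 + p \<le> 2*h1 + m1*p + 3"
    and ty1: "(A1 = {r} \<and> m1 = 1) \<or> (\<exists>B us ws. legs E S1 r B us ws \<and> length us = m1)"
    unfolding good_def by blast+
  from g1 obtain xs1 where xs1: "walk_in E S1 xs1" "distinct xs1" "hd xs1 = r" "length xs1 = h1+1"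
    unfolding good_def by blast
  from g2 have A2: "A2 \<subseteq> S2" "r \<in> A2" and cov2: "\<forall>u\<in>S2. \<forall>v\<in>S2. E u v \<longrightarrow> u \<in> A2 \<or> v \<in> A2"
    and m2: "m2 \<ge> 1" and bd2: "2*card A2 + 3*m2 + p \<le> 2*h2 + m2*p + 3"
    and ty2: "(A2 = {r} \<and> m2 = 1) \<or> (\<exists>B us ws. legs E S2 r B us ws \<and> length us = m2)"
    unfolding good_def by blast+
  from g2 obtain xs2 where xs2: "walk_in E S2 xs2" "distinct xs2" "hd xs2 = r" "length xs2 = h2+1"
    unfolding good_def by blast
  show ?thesis
  proof (cases "A2 = {r} \<and> m2 = 1")
    case True
    have "\<forall>u\<in>S1\<union>S2. \<forall>v\<in>S1\<union>S2. E u v \<longrightarrow> u \<in> A1 \<or> v \<in> A1"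
    proof (intro ballI impI)
      fix u v assume uv: "u \<in> S1\<union>S2" "v \<in> S1\<union>S2" "E u v"
      then have "(u\<in>S1 \<and> v\<in>S1) \<or> (u\<in>S2 \<and> v\<in>S2)" using cross by blast
      then show "u \<in> A1 \<or> v \<in> A1"
      proof
        assume "u\<in>S1 \<and> v\<in>S1" then show ?thesis using cov1 uv(3) by blast
      next
        assume "u\<in>S2 \<and> v\<in>S2" then have "u \<in> A2 \<or> v \<in> A2" using cov2 uv(3) by blast
        then show ?thesis using True A1 by blast
      qed
    qed
    then have "good E p (S1\<union>S2) r A1 h1 m1"
      by (rule good_extend[OF g1, rotated]) blast
    then show ?thesis by blast
  next
    case F2: False
    show ?thesis
    proof (cases "A1 = {r} \<and> m1 = 1")
      case True
      have "\<forall>u\<in>S1\<union>S2. \<forall>v\<in>S1\<union>S2. E u v \<longrightarrow> u \<in> A2 \<or> v \<in> A2"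
      proof (intro ballI impI)
        fix u v assume uv: "u \<in> S1\<union>S2" "v \<in> S1\<union>S2" "E u v"
        then have "(u\<in>S1 \<and> v\<in>S1) \<or> (u\<in>S2 \<and> v\<in>S2)" using cross by blast
        then show "u \<in> A2 \<or> v \<in> A2"
        proof
          assume "u\<in>S2 \<and> v\<in>S2" then show ?thesis using cov2 uv(3) by blast
        next
          assume "u\<in>S1 \<and> v\<in>S1" then have "u \<in> A1 \<or> v \<in> A1" using cov1 uv(3) by blast
          then show ?thesis using True A2 by blast
        qed
      qed
      then have "good E p (S1\<union>S2) r A2 h2 m2"
        by (rule good_extend[OF g2, rotated]) blast
      then show ?thesis by blast
    next
      case F1: False
      obtain B1 us1 ws1 where L1: "legs E S1 r B1 us1 ws1" "length us1 = m1" using ty1 F1 by blast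
      obtain B2 us2 ws2 where L2: "legs E S2 r B2 us2 ws2" "length us2 = m2" using ty2 F2 by blast
      have legs: "legs E (S1\<union>S2) r (B1\<union>B2) (us1@us2) (ws1@ws2)"
      proof -
        have a: "r \<in> B1" "B1 \<subseteq> S1" "connected_set E B1" "length us1 = length ws1"
          "distinct (us1 @ ws1)" "set us1 \<union> set ws1 \<subseteq> S1 - B1"
          "\<forall>i<length us1. E (us1!i) (ws1!i) \<and> (\<exists>b\<in>B1. E b (us1!i))"
          using L1 unfolding legs_def by blast+
        have b: "r \<in> B2" "B2 \<subseteq> S2" "connected_set E B2" "length us2 = length ws2"
          "distinct (us2 @ ws2)" "set us2 \<union> set ws2 \<subseteq> S2 - B2"
          "\<forall>i<length us2. E (us2!i) (ws2!i) \<and> (\<exists>b\<in>B2. E b (us2!i))"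
          using L2 unfolding legs_def by blast+
        have s1: "set us1 \<union> set ws1 \<subseteq> S1 - {r}" using a by blast
        have s2: "set us2 \<union> set ws2 \<subseteq> S2 - {r}" using b by blast
        have disj: "(set us1 \<union> set ws1) \<inter> (set us2 \<union> set ws2) = {}" using s1 s2 int by blast
        have dist: "distinct ((us1@us2) @ (ws1@ws2))" using a(5) b(5) disj by auto
        have sets: "set (us1@us2) \<union> set (ws1@ws2) \<subseteq> (S1\<union>S2) - (B1\<union>B2)"
        proof -
          have "set us1 \<union> set ws1 \<subseteq> (S1\<union>S2) - (B1\<union>B2)"
          proof
            fix x assume x: "x \<in> set us1 \<union> set ws1"
            then have "x \<in> S1" "x \<notin> B1" "x \<noteq> r" using a(6) s1 by blast+
            then show "x \<in> (S1\<union>S2) - (B1\<union>B2)" using int b(2) by blast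
          qed
          moreover have "set us2 \<union> set ws2 \<subseteq> (S1\<union>S2) - (B1\<union>B2)"
          proof
            fix x assume x: "x \<in> set us2 \<union> set ws2"
            then have "x \<in> S2" "x \<notin> B2" "x \<noteq> r" using b(6) s2 by blast+
            then show "x \<in> (S1\<union>S2) - (B1\<union>B2)" using int a(2) by blast
          qed
          ultimately show ?thesis by auto
        qed
        have nth: "\<forall>i<length (us1@us2). E ((us1@us2)!i) ((ws1@ws2)!i) \<and> (\<exists>b\<in>B1\<union>B2. E b ((us1@us2)!i))"
        proof (intro allI impI)
          fix i assume i: "i < length (us1@us2)"
          show "E ((us1@us2)!i) ((ws1@ws2)!i) \<and> (\<exists>b\<in>B1\<union>B2. E b ((us1@us2)!i))"
          proof (cases "i < length us1")
            case True then show ?thesis using a(4,7) by (auto simp: nth_append)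
          next
            case False
            then have "i - length us1 < length us2" using i by simp
            then show ?thesis using False a(4) b(7) by (auto simp: nth_append)
          qed
        qed
        show ?thesis unfolding legs_def
          using a b conn_union[OF a(3) b(3) a(1) b(1)] dist sets nth by auto
      qed
      have finA: "finite A1" "finite A2" using A1 A2 fin finite_subset by blast+
      have AI: "A1 \<inter> A2 = {r}" using A1 A2 int by blast
      have cardU: "card (A1 \<union> A2) + 1 = card A1 + card A2"
        using card_Un_Int[OF finA] AI by simp
      have len: "h1 + h2 + 1 \<le> p"
      proof -
        have ne1: "xs1 \<noteq> []" using xs1 walk_nonempty by blast
        have ne2: "xs2 \<noteq> []" using xs2 walk_nonempty by blast
        define ys where "ys = rev xs2 @ tl xs1"
        have lys: "length ys = h1 + h2 + 1" using xs1 xs2 ys_def by simp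
        have w2: "walk_in E (S1\<union>S2) (rev xs2)"
          using walk_rev[OF sym walk_mono[OF xs2(1)]] by blast
        have wy: "walk_in E (S1\<union>S2) ys"
        proof (cases "tl xs1 = []")
          case True then show ?thesis using w2 ys_def by simp
        next
          case False
          then obtain a t where xt: "xs1 = r # a # t" using xs1(3) ne1
            by (cases xs1; cases "tl xs1") auto
          then have "walk_in E (S1\<union>S2) (a # t)" "E r a"
            using walk_mono[OF xs1(1), of "S1\<union>S2"] by auto
          then show ?thesis using w2 ys_def xt walk_append[of "rev xs2" "a#t" E "S1\<union>S2"] ne2 xs2(3)
            by (simp add: last_rev)
        qed
        have dy: "distinct ys"
        proof -
          have "set (tl xs1) \<subseteq> S1 - {r}"
            using xs1 walk_set[OF xs1(1)] ne1 by (cases xs1) auto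
          then have "set (tl xs1) \<inter> set xs2 = {}" using walk_set[OF xs2(1)] int by blast
          then show ?thesis using ys_def xs1(2) xs2(2) by (auto simp: distinct_tl)
        qed
        show ?thesis using pb wy dy lys by metis
      qed
      have "2*card (A1\<union>A2) + 3*(m1+m2) + p \<le> 2*h1 + (m1+m2)*p + 3"
      proof -
        have h2: "2*h2 + 1 \<le> p" using len hle by linarith
        have "2*card (A1\<union>A2) + 3*m1 + 3*m2 + p \<le> 2*h1 + m1*p + m2*p + 3"
          using bd1 bd2 cardU h2 by linarith
        then show ?thesis by (simp add: add_mult_distrib distrib_left)
      qed
      moreover have "A1 \<union> A2 \<subseteq> S1 \<union> S2" "r \<in> A1 \<union> A2" using A1 A2 by auto
      moreover have "\<forall>u\<in>S1\<union>S2. \<forall>v\<in>S1\<union>S2. E u v \<longrightarrow> u \<in> A1\<union>A2 \<or> v \<in> A1\<union>A2"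
        using cross cov1 cov2 by blast
      moreover have "\<exists>xs. walk_in E (S1\<union>S2) xs \<and> distinct xs \<and> hd xs = r \<and> length xs = h1+1"
        using xs1 walk_mono[OF xs1(1), of "S1\<union>S2"] by blast
      moreover have "\<exists>B us ws. legs E (S1\<union>S2) r B us ws \<and> length us = m1+m2"
        using legs L1 L2 by (intro exI[of _ "B1\<union>B2"] exI[of _ "us1@us2"] exI[of _ "ws1@ws2"]) simp
      moreover have "1 \<le> m1 + m2" using m1 by simp
      ultimately have "good E p (S1\<union>S2) r (A1\<union>A2) h1 (m1+m2)"
        unfolding good_def by (intro conjI disjI2) blast+
      then show ?thesis by blast
    qed
  qed
qed

lemma good_merge:
  assumes g1: "good E p S1 r A1 h1 m1" and g2: "good E p S2 r A2 h2 m2"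
    and fin: "finite S1" "finite S2" and int: "S1 \<inter> S2 = {r}"
    and cross: "\<forall>u\<in>S1\<union>S2. \<forall>v\<in>S1\<union>S2. E u v \<longrightarrow> (u\<in>S1 \<and> v\<in>S1) \<or> (u\<in>S2 \<and> v\<in>S2)"
    and pb: "\<forall>ys. walk_in E (S1\<union>S2) ys \<and> distinct ys \<longrightarrow> length ys \<le> p"
    and sym: "\<And>a b. E a b \<Longrightarrow> E b a"
  shows "\<exists>A h m. good E p (S1\<union>S2) r A h m"
proof (cases "h2 \<le> h1")
  case True then show ?thesis using good_merge_le[OF g1 g2 fin int cross pb sym] by blast
next
  case False
  have U: "S2 \<union> S1 = S1 \<union> S2" by blast
  have int': "S2 \<inter> S1 = {r}" using int by blast
  have cross': "\<forall>u\<in>S2\<union>S1. \<forall>v\<in>S2\<union>S1. E u v \<longrightarrow> (u\<in>S2 \<and> v\<in>S2) \<or> (u\<in>S1 \<and> v\<in>S1)"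
    using cross unfolding U by blast
  have pb': "\<forall>ys. walk_in E (S2\<union>S1) ys \<and> distinct ys \<longrightarrow> length ys \<le> p" using pb unfolding U .
  have "h1 \<le> h2" using False by simp
  from good_merge_le[OF g2 g1 fin(2,1) int' cross' pb' sym this] show ?thesis unfolding U .
qed




lemma main_good:
  assumes gr: "graph V E" and pb: "\<forall>ys. walk_in E V ys \<and> distinct ys \<longrightarrow> length ys \<le> p"
  shows "connected_set E S \<Longrightarrow> S \<subseteq> V \<Longrightarrow> r \<in> S \<Longrightarrow> 2 \<le> card S \<Longrightarrow> \<exists>A h m. good E p S r A h m"
proof (induction "card S" arbitrary: S r rule: less_induct)
  case less
  have sym: "\<And>a b. E a b \<Longrightarrow> E b a" and irr: "\<And>a. \<not> E a a" and finV: "finite V"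
    using gr unfolding graph_def by blast+
  have finS: "finite S" using less.prems finV finite_subset by blast
  have Sconn: "\<forall>u\<in>S. \<forall>v\<in>S. (Rel E S)\<^sup>*\<^sup>* u v" using less.prems(1) unfolding conn_iff by blast
  obtain y where y: "y \<in> S" "y \<noteq> r"
  proof -
    have "\<not> S \<subseteq> {r}"
    proof
      assume "S \<subseteq> {r}"
      then have "card S \<le> card {r}" by (intro card_mono) auto
      then show False using less.prems(4) by simp
    qed
    then show ?thesis using that by blast
  qed
  have "(Rel E S)\<^sup>*\<^sup>* r y" using Sconn y less.prems(3) by blast
  then obtain x where rx: "Rel E S r x"
  proof (cases rule: converse_rtranclpE)
    case base then show ?thesis using y(2) by simp
  next
    case (step x) then show ?thesis using that by blast
  qed
  then have xS: "x \<in> S" and Erx: "E r x" by (auto simp: Rel_def)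
  have xr: "x \<noteq> r" using Erx irr by blast
  define T where "T = S - {r}"
  define C where "C = {z. (Rel E T)\<^sup>*\<^sup>* x z}"
  have xT: "x \<in> T" using xS xr T_def by blast
  have xC: "x \<in> C" using C_def by simp
  have CT: "C \<subseteq> T"
  proof
    fix z assume "z \<in> C"
    then have "(Rel E T)\<^sup>*\<^sup>* x z" using C_def by simp
    then show "z \<in> T" using rtr_in xT by metis
  qed
  have closed: "\<And>z w. z \<in> C \<Longrightarrow> Rel E T z w \<Longrightarrow> w \<in> C"
  proof -
    fix z w assume "z \<in> C" "Rel E T z w"
    then have "(Rel E T)\<^sup>*\<^sup>* x w" using C_def rtranclp.rtrancl_into_rtrancl by fastforce
    then show "w \<in> C" using C_def by simp
  qed
  have Cconn: "connected_set E C"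
    unfolding conn_iff
  proof (intro conjI ballI)
    show "C \<noteq> {}" using xC by blast
    fix u v assume uv: "u \<in> C" "v \<in> C"
    have "(Rel E T)\<^sup>*\<^sup>* x u" using uv(1) C_def by simp
    then have "(Rel E T)\<^sup>*\<^sup>* u x" using rtr_sym[of E T x u] sym by blast
    moreover have "(Rel E T)\<^sup>*\<^sup>* x v" using uv(2) C_def by blast
    ultimately have "(Rel E T)\<^sup>*\<^sup>* u v" by (rule rtranclp_trans)
    then show "(Rel E C)\<^sup>*\<^sup>* u v" using rtr_restrict[of E T u v C] uv CT closed by blast
  qed
  have rC: "r \<notin> C" using CT T_def by blast
  have CS: "C \<subseteq> S" using CT T_def by blast
  have finC: "finite C" using CS finS finite_subset by blast
  have cardC: "card C < card S" using CS rC less.prems(3) finS by (intro psubset_card_mono) auto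
  have g1: "\<exists>A h m. good E p (insert r C) r A h m"
  proof (cases "2 \<le> card C")
    case True
    obtain A h m where "good E p C x A h m"
      using less.hyps[OF cardC Cconn _ xC True] CS less.prems(2) by blast
    then show ?thesis using good_lift[OF _ finC rC Erx sym irr] by blast
  next
    case False
    have "card C \<noteq> 0" using finC xC by auto
    then have "card C = 1" using False by linarith
    then obtain a where "C = {a}" by (rule card_1_singletonE)
    then have "C = {x}" using xC by blast
    then have "insert r C = {r, x}" by simp
    then show ?thesis using good_base[OF Erx xr[symmetric] irr, of p] by auto
  qed
  define S2 where "S2 = S - C"
  have rS2: "r \<in> S2" using S2_def less.prems(3) rC by blast
  have SU: "S = insert r C \<union> S2" using S2_def CS less.prems(3) by blast
  show ?case
  proof (cases "S2 = {r}")
    case True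
    then have "S = insert r C" using SU by blast
    then show ?thesis using g1 by simp
  next
    case False
    then obtain z where z: "z \<in> S2" "z \<noteq> r" using rS2 by blast
    have finS2: "finite S2" using S2_def finS by simp
    have c2: "2 \<le> card S2"
    proof -
      have "{r, z} \<subseteq> S2" using z rS2 by blast
      then have "card {r,z} \<le> card S2" using finS2 card_mono by blast
      then show ?thesis using z by simp
    qed
    have c2': "card S2 < card S" unfolding S2_def
      by (intro psubset_card_mono) (use xC xS finS in auto)
    have S2conn: "connected_set E S2"
    proof -
      have reach: "(Rel E S)\<^sup>*\<^sup>* r w \<Longrightarrow> w \<notin> C \<Longrightarrow> (Rel E S2)\<^sup>*\<^sup>* r w" for w
      proof (induction rule: rtranclp_induct)
        case base then show ?case by simp
      next
        case (step a b)
        have ab: "a \<in> S" "b \<in> S" "E a b" using step.hyps(2) by (auto simp: Rel_def)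
        show ?case
        proof (cases "a \<in> C")
          case True
          show ?thesis
          proof (cases "b = r")
            case True then show ?thesis by simp
          next
            case False
            then have "Rel E T a b" using ab T_def True CT by (auto simp: Rel_def)
            then have "b \<in> C" using closed True by blast
            then show ?thesis using step.prems by blast
          qed
        next
          case False
          then have "(Rel E S2)\<^sup>*\<^sup>* r a" using step.IH by blast
          moreover have "Rel E S2 a b" using ab False step.prems S2_def by (auto simp: Rel_def)
          ultimately show ?thesis by (rule rtranclp.rtrancl_into_rtrancl)
        qed
      qed
      show ?thesis unfolding conn_iff
      proof (intro conjI ballI)
        show "S2 \<noteq> {}" using rS2 by blast
        fix u v assume uv: "u \<in> S2" "v \<in> S2"
        have "(Rel E S2)\<^sup>*\<^sup>* r u" "(Rel E S2)\<^sup>*\<^sup>* r v"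
          using reach Sconn uv less.prems(3) S2_def by auto
        then have "(Rel E S2)\<^sup>*\<^sup>* u r" "(Rel E S2)\<^sup>*\<^sup>* r v" using rtr_sym[of E S2 r u] sym by blast+
        then show "(Rel E S2)\<^sup>*\<^sup>* u v" by (rule rtranclp_trans)
      qed
    qed
    obtain A2 h2 m2 where g2: "good E p S2 r A2 h2 m2"
      using less.hyps[OF c2' S2conn _ rS2 c2] less.prems(2) S2_def by blast
    obtain A1 h1 m1 where g1': "good E p (insert r C) r A1 h1 m1" using g1 by blast
    have int: "insert r C \<inter> S2 = {r}" using S2_def rS2 by blast
    have cross: "\<forall>u\<in>insert r C \<union> S2. \<forall>v\<in>insert r C \<union> S2. E u v \<longrightarrow>
        (u\<in>insert r C \<and> v\<in>insert r C) \<or> (u\<in>S2 \<and> v\<in>S2)"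
    proof (intro ballI impI)
      fix u v assume uv: "u \<in> insert r C \<union> S2" "v \<in> insert r C \<union> S2" "E u v"
      have uvS: "u \<in> S" "v \<in> S" using uv SU by auto
      show "(u\<in>insert r C \<and> v\<in>insert r C) \<or> (u\<in>S2 \<and> v\<in>S2)"
      proof (cases "u \<in> C \<or> v \<in> C")
        case True
        then show ?thesis
        proof
          assume uC: "u \<in> C"
          show ?thesis
          proof (cases "v = r")
            case False
            then have "Rel E T u v" using uvS uv(3) T_def uC CT by (auto simp: Rel_def)
            then show ?thesis using closed uC by blast
          qed (use uC in auto)
        next
          assume vC: "v \<in> C"
          show ?thesis
          proof (cases "u = r")
            case False
            then have "Rel E T v u" using uvS sym[OF uv(3)] T_def vC CT by (auto simp: Rel_def)
            then show ?thesis using closed vC by blast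
          qed (use vC in auto)
        qed
      next
        case False
        then show ?thesis using uvS S2_def by blast
      qed
    qed
    have pb': "\<forall>ys. walk_in E (insert r C \<union> S2) ys \<and> distinct ys \<longrightarrow> length ys \<le> p"
    proof (intro allI impI)
      fix ys assume "walk_in E (insert r C \<union> S2) ys \<and> distinct ys"
      moreover have "insert r C \<union> S2 \<subseteq> V" using SU less.prems(2) by blast
      ultimately have "walk_in E V ys" "distinct ys" using walk_mono by blast+
      then show "length ys \<le> p" using pb by blast
    qed
    have "\<exists>A h m. good E p (insert r C \<union> S2) r A h m"
      by (rule good_merge[OF g1' g2 _ finS2 int cross pb' sym]) (use finC in simp)
    then show ?thesis using SU by simp
  qed
qed




lemma path_len_le:
  assumes "graph V E" "walk_in E V ys" "distinct ys"
  shows "length ys \<le> path_number V E"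
proof -
  have finV: "finite V" using assms(1) unfolding graph_def by blast
  let ?P = "{length xs | xs. is_path V E xs}"
  have "?P \<subseteq> {0..card V}"
  proof
    fix n assume "n \<in> ?P"
    then obtain xs where "n = length xs" "is_path V E xs" by blast
    then have "n = card (set xs)" "set xs \<subseteq> V" unfolding is_path_def walk_in_def
      by (auto simp: distinct_card)
    then show "n \<in> {0..card V}" using card_mono[OF finV] by auto
  qed
  then have "finite ?P" using finite_subset by blast
  moreover have "length ys \<in> ?P" using assms unfolding is_path_def by blast
  ultimately show ?thesis unfolding path_number_def by (rule Max_ge)
qed

lemma tau_le:
  assumes "graph V E" "vertex_cover V E A"
  shows "tau V E \<le> card A"
proof -
  have finV: "finite V" using assms(1) unfolding graph_def by blast
  let ?P = "{card A | A. vertex_cover V E A}"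
  have "?P \<subseteq> {0..card V}"
    using card_mono[OF finV] unfolding vertex_cover_def by auto
  then have "finite ?P" using finite_subset by blast
  moreover have "card A \<in> ?P" using assms by blast
  ultimately show ?thesis unfolding tau_def by (rule Min_le)
qed

lemma minor_bound:
  assumes "graph V E" "is_minor (dll_V k) (dll_E k) V E"
  shows "k \<le> card V"
proof -
  have finV: "finite V" using assms(1) unfolding graph_def by blast
  obtain \<phi> where phi: "\<forall>x\<in>dll_V k. \<phi> x \<subseteq> V \<and> connected_set E (\<phi> x)"
    "\<forall>x\<in>dll_V k. \<forall>y\<in>dll_V k. x \<noteq> y \<longrightarrow> \<phi> x \<inter> \<phi> y = {}"
  proof -
    from assms(2) have "\<exists>\<phi>. (\<forall>x\<in>dll_V k. \<phi> x \<subseteq> V \<and> connected_set E (\<phi> x)) \<and>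
      (\<forall>x\<in>dll_V k. \<forall>y\<in>dll_V k. x \<noteq> y \<longrightarrow> \<phi> x \<inter> \<phi> y = {})"
      unfolding is_minor_def by (elim exE conjE) (rule exI, rule conjI, assumption+)
    then obtain \<phi> where "(\<forall>x\<in>dll_V k. \<phi> x \<subseteq> V \<and> connected_set E (\<phi> x))"
      "(\<forall>x\<in>dll_V k. \<forall>y\<in>dll_V k. x \<noteq> y \<longrightarrow> \<phi> x \<inter> \<phi> y = {})" by (elim exE conjE)
    then show ?thesis using that by blast
  qed
  define f where "f i = (SOME a. a \<in> \<phi> (U i))" for i
  have fin: "f i \<in> \<phi> (U i)" if "i \<in> {1..k}" for i
  proof -
    have "U i \<in> dll_V k" using that unfolding dll_V_def by blast
    then have "connected_set E (\<phi> (U i))" using phi(1) by blast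
    then have "\<phi> (U i) \<noteq> {}" unfolding connected_set_def by (elim conjE)
    then show ?thesis unfolding f_def by (simp add: some_in_eq)
  qed
  have "inj_on f {1..k}"
  proof (rule inj_onI)
    fix i j assume ij: "i \<in> {1..k}" "j \<in> {1..k}" "f i = f j"
    show "i = j"
    proof (rule ccontr)
      assume "i \<noteq> j"
      moreover have "U i \<in> dll_V k" "U j \<in> dll_V k" using ij unfolding dll_V_def by blast+
      moreover have "U i \<noteq> U j" using \<open>i \<noteq> j\<close> by simp
      ultimately have "\<phi> (U i) \<inter> \<phi> (U j) = {}" using phi(2)[rule_format, of "U i" "U j"] by simp
      moreover have "f i \<in> \<phi> (U i)" "f i \<in> \<phi> (U j)" using fin[OF ij(1)] fin[OF ij(2)] ij(3) by simp_all
      ultimately show False by (simp add: disjoint_iff)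
    qed
  qed
  moreover have "f ` {1..k} \<subseteq> V"
  proof
    fix a assume "a \<in> f ` {1..k}"
    then obtain i where i: "i \<in> {1..k}" "a = f i" by blast
    have "U i \<in> dll_V k" using i(1) unfolding dll_V_def by blast
    then have "\<phi> (U i) \<subseteq> V" using phi(1)[rule_format, of "U i"] by simp
    moreover have "f i \<in> \<phi> (U i)" by (rule fin[OF i(1)])
    ultimately show "a \<in> V" using i(2) by blast
  qed
  ultimately have "card {1..k} \<le> card V" by (rule card_inj_on_le[OF _ _ finV])
  then show ?thesis by simp
qed

lemma legs_minor:
  assumes "legs E V r B us ws" "length us = m" "\<And>a b. E a b \<Longrightarrow> E b a"
  shows "is_minor (dll_V m) (dll_E m) V E"
proof -
  have a: "r \<in> B" "B \<subseteq> V" "connected_set E B" "length us = length ws"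
    "distinct (us @ ws)" "set us \<union> set ws \<subseteq> V - B"
    "\<forall>i<length us. E (us!i) (ws!i) \<and> (\<exists>b\<in>B. E b (us!i))"
    using assms(1) unfolding legs_def by blast+
  define zs where "zs = us @ ws"
  have lz: "length zs = 2*m" using zs_def a(4) assms(2) by simp
  have dz: "distinct zs" using zs_def a(5) by simp
  have sz: "set zs \<subseteq> V - B" using zs_def a(6) by simp
  define idx where "idx v = (case v of R \<Rightarrow> 0 | U i \<Rightarrow> i - 1 | L i \<Rightarrow> m + i - 1)" for v
  define \<phi> where "\<phi> v = (case v of R \<Rightarrow> B | _ \<Rightarrow> {zs ! idx v})" for v
  have phiR: "\<phi> R = B" by (simp add: \<phi>_def)
  have phiU: "\<phi> (U i) = {zs ! (i-1)}" for i by (simp add: \<phi>_def idx_def)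
  have phiL: "\<phi> (L i) = {zs ! (m+i-1)}" for i by (simp add: \<phi>_def idx_def)
  have zU: "zs ! (i-1) = us ! (i-1)" if "i \<in> {1..m}" for i
  proof -
    have "i - 1 < length us" using that assms(2) by auto
    then show ?thesis unfolding zs_def by (simp add: nth_append)
  qed
  have zL: "zs ! (m+i-1) = ws ! (i-1)" if "i \<in> {1..m}" for i
  proof -
    have "m+i-1 = length us + (i-1)" using that assms(2) by auto
    then show ?thesis unfolding zs_def by (simp only: nth_append_length_plus)
  qed
  have memV: "x \<in> dll_V m \<longleftrightarrow> x = R \<or> (\<exists>i\<in>{1..m}. x = U i) \<or> (\<exists>i\<in>{1..m}. x = L i)" for x
    unfolding dll_V_def by blast
  have nonR: "\<phi> x = {zs ! idx x} \<and> idx x < 2*m" if "x \<in> dll_V m" "x \<noteq> R" for x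
  proof -
    from that memV consider (u) i where "i \<in> {1..m}" "x = U i" | (l) i where "i \<in> {1..m}" "x = L i" by blast
    then show ?thesis
    proof cases
      case u then show ?thesis using phiU by (auto simp: idx_def)
    next
      case l then show ?thesis using phiL by (auto simp: idx_def)
    qed
  qed
  have idx_inj: "idx x \<noteq> idx y" if "x \<in> dll_V m" "y \<in> dll_V m" "x \<noteq> R" "y \<noteq> R" "x \<noteq> y" for x y
  proof -
    from that(1,3) memV consider (u) i where "i \<in> {1..m}" "x = U i" | (l) i where "i \<in> {1..m}" "x = L i" by blast
    then show ?thesis
    proof cases
      case u
      from that(2,4) memV consider (u') j where "j \<in> {1..m}" "y = U j" | (l') j where "j \<in> {1..m}" "y = L j" by blast
      then show ?thesis
      proof cases
        case u' then show ?thesis using u that(5) by (auto simp: idx_def)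
      next
        case l' then show ?thesis using u by (auto simp: idx_def)
      qed
    next
      case l
      from that(2,4) memV consider (u') j where "j \<in> {1..m}" "y = U j" | (l') j where "j \<in> {1..m}" "y = L j" by blast
      then show ?thesis
      proof cases
        case u' then show ?thesis using l by (auto simp: idx_def)
      next
        case l' then show ?thesis using l that(5) by (auto simp: idx_def)
      qed
    qed
  qed
  have single: "connected_set E {x}" for x by (auto simp: conn_iff)
  have P1: "\<forall>x\<in>dll_V m. \<phi> x \<subseteq> V \<and> connected_set E (\<phi> x)"
  proof
    fix x assume x: "x \<in> dll_V m"
    show "\<phi> x \<subseteq> V \<and> connected_set E (\<phi> x)"
    proof (cases "x = R")
      case True then show ?thesis using phiR a(2,3) by simp
    next
      case False
      then have "\<phi> x = {zs ! idx x}" "idx x < length zs" using nonR[OF x] lz by auto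
      then have "zs ! idx x \<in> set zs" "\<phi> x = {zs ! idx x}" using nth_mem by auto
      then show ?thesis using sz single by auto
    qed
  qed
  have P2: "\<forall>x\<in>dll_V m. \<forall>y\<in>dll_V m. x \<noteq> y \<longrightarrow> \<phi> x \<inter> \<phi> y = {}"
  proof (intro ballI impI)
    fix x y assume xy: "x \<in> dll_V m" "y \<in> dll_V m" "x \<noteq> y"
    show "\<phi> x \<inter> \<phi> y = {}"
    proof (cases "x = R")
      case True
      then have "y \<noteq> R" using xy by simp
      then have "\<phi> y = {zs ! idx y}" "idx y < length zs" using nonR[OF xy(2)] lz by auto
      then have "zs ! idx y \<in> set zs" "\<phi> y = {zs ! idx y}" using nth_mem by auto
      then show ?thesis using True phiR sz by auto
    next
      case xR: False
      show ?thesis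
      proof (cases "y = R")
        case True
        then have "\<phi> x = {zs ! idx x}" "idx x < length zs" using nonR[OF xy(1) xR] lz by auto
        then have "zs ! idx x \<in> set zs" "\<phi> x = {zs ! idx x}" using nth_mem by auto
        then show ?thesis using True phiR sz by auto
      next
        case False
        have px: "\<phi> x = {zs ! idx x}" "idx x < length zs" using nonR[OF xy(1) xR] lz by auto
        have py: "\<phi> y = {zs ! idx y}" "idx y < length zs" using nonR[OF xy(2) False] lz by auto
        have "idx x \<noteq> idx y" using idx_inj[OF xy(1,2) xR False xy(3)] .
        then have "zs ! idx x \<noteq> zs ! idx y" using dz px(2) py(2) by (simp add: nth_eq_iff_index_eq)
        then show ?thesis using px py by simp
      qed
    qed
  qed
  have P3: "\<forall>x\<in>dll_V m. \<forall>y\<in>dll_V m. dll_E m x y \<longrightarrow> (\<exists>a\<in>\<phi> x. \<exists>b\<in>\<phi> y. E a b)"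
  proof (intro ballI impI)
    fix x y assume xy: "x \<in> dll_V m" "y \<in> dll_V m" "dll_E m x y"
    then obtain i where i: "i \<in> {1..m}" and
      c: "(x = R \<and> y = U i) \<or> (x = U i \<and> y = R) \<or> (x = U i \<and> y = L i) \<or> (x = L i \<and> y = U i)"
      unfolding dll_E_def by blast
    have ii: "i - 1 < length us" using i assms(2) by auto
    have e: "E (us!(i-1)) (ws!(i-1))" "\<exists>b\<in>B. E b (us!(i-1))" using a(7) ii by auto
    have pu: "\<phi> (U i) = {us!(i-1)}" using phiU zU[OF i] by simp
    have pl: "\<phi> (L i) = {ws!(i-1)}" using phiL zL[OF i] by simp
    from c show "\<exists>a\<in>\<phi> x. \<exists>b\<in>\<phi> y. E a b"
    proof (elim disjE conjE)
      assume "x = R" "y = U i" then show ?thesis using pu phiR e(2) by auto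
    next
      assume "x = U i" "y = R" then show ?thesis using pu phiR e(2) assms(3) by auto
    next
      assume "x = U i" "y = L i" then show ?thesis using pu pl e(1) by auto
    next
      assume "x = L i" "y = U i" then show ?thesis using pu pl e(1) assms(3) by auto
    qed
  qed
  show ?thesis unfolding is_minor_def using P1 P2 P3 by blast
qed




theorem mainTheorem17:
  fixes V :: "'a set" and E :: "'a \<Rightarrow> 'a \<Rightarrow> bool"
  assumes "connected_graph V E"
  shows "int (tau V E) \<le> \<lceil>(real (dll V E) + 1) * real (path_number V E) / 2\<rceil>"
proof -
  have gr: "graph V E" and conn: "connected_set E V" using assms unfolding connected_graph_def by blast+
  have sym: "\<And>a b. E a b \<Longrightarrow> E b a" and irr: "\<And>a. \<not> E a a" and finV: "finite V"
    using gr unfolding graph_def by blast+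
  define p where "p = path_number V E"
  define k where "k = dll V E"
  obtain r where rV: "r \<in> V" using conn unfolding connected_set_def by blast
  have pb: "\<forall>ys. walk_in E V ys \<and> distinct ys \<longrightarrow> length ys \<le> p"
    using path_len_le[OF gr] p_def by blast
  have p1: "1 \<le> p" using pb[rule_format, of "[r]"] rV by simp
  have xpos: "0 < (real k + 1) * real p / 2" using p1 by simp
  have "int (tau V E) \<le> \<lceil>(real k + 1) * real p / 2\<rceil>"
  proof (cases "2 \<le> card V")
    case False
    then have "card V \<le> 1" by simp
    then have "V = {r}" using rV finV by (metis card_le_Suc0_iff_eq One_nat_def singletonI subsetI subset_antisym singletonD)
    then have "vertex_cover V E {}" unfolding vertex_cover_def using irr by auto
    then have "tau V E = 0" using tau_le[OF gr] by fastforce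
    moreover have "0 \<le> \<lceil>(real k + 1) * real p / 2\<rceil>" using xpos by (simp add: order_less_imp_le)
    ultimately show ?thesis by simp
  next
    case True
    obtain A h m where g: "good E p V r A h m" using main_good[OF gr pb conn _ rV True] by blast
    from g have AV: "A \<subseteq> V" and cov: "\<forall>u\<in>V. \<forall>v\<in>V. E u v \<longrightarrow> u \<in> A \<or> v \<in> A"
      and m1: "m \<ge> 1" and bd: "2*card A + 3*m + p \<le> 2*h + m*p + 3"
      and ty: "(A = {r} \<and> m = 1) \<or> (\<exists>B us ws. legs E V r B us ws \<and> length us = m)"
      unfolding good_def by blast+
    from g obtain xs where xs: "walk_in E V xs" "distinct xs" "length xs = h+1"
      unfolding good_def by blast
    have hp: "h + 1 \<le> p" using pb xs by metis
    have vc: "vertex_cover V E A" unfolding vertex_cover_def using AV cov by blast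
    have tA: "tau V E \<le> card A" using tau_le[OF gr vc] .
    show ?thesis using ty
    proof
      assume "A = {r} \<and> m = 1"
      then have "card A = 1" by simp
      moreover have "0 < \<lceil>(real k + 1) * real p / 2\<rceil>" using xpos by simp
      ultimately show ?thesis using tA by linarith
    next
      assume "\<exists>B us ws. legs E V r B us ws \<and> length us = m"
      then obtain B us ws where L: "legs E V r B us ws" "length us = m" by blast
      have "is_minor (dll_V m) (dll_E m) V E" using legs_minor[OF L sym] .
      then have mk: "m \<le> k" unfolding k_def dll_def
        using Greatest_le_nat[of "\<lambda>k. is_minor (dll_V k) (dll_E k) V E" m "card V"] minor_bound[OF gr]
        by blast
      have "m*p \<le> k*p" using mk by simp
      then have "2 * card A \<le> k*p + p" using bd hp m1 by linarith
      then have "real (2 * card A) \<le> real (k*p + p)" by linarith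
      then have "real (card A) \<le> (real k + 1) * real p / 2" by (simp add: algebra_simps)
      then have "\<lceil>real (card A)\<rceil> \<le> \<lceil>(real k + 1) * real p / 2\<rceil>" by (rule ceiling_mono)
      then show ?thesis using tA by simp
    qed
  qed
  then show ?thesis by (simp add: p_def k_def)
qed


end
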